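(* Each of the following ten sets of four generalized Bell states in $\mathbb{C}^4\otimes\mathbb{C}^4$ is perfectly distinguishable by one-way LOCC using only projective measurements: $\{\ket{\psi_{00}}\}\cup T$ with $T$ one of $\{\ket{\psi_{01}},\ket{\psi_{10}},\ket{\psi_{11}}\}$, $\{\ket{\psi_{01}},\ket{\psi_{10}},\ket{\psi_{30}}\}$, $\{\ket{\psi_{01}},\ket{\psi_{10}},\ket{\psi_{32}}\}$, $\{\ket{\psi_{01}},\ket{\psi_{11}},\ket{\psi_{12}}\}$, $\{\ket{\psi_{01}},\ket{\psi_{11}},\ket{\psi_{31}}\}$, $\{\ket{\psi_{01}},\ket{\psi_{11}},\ket{\psi_{33}}\}$, $\{\ket{\psi_{01}},\ket{\psi_{12}},\ket{\psi_{30}}\}$, $\{\ket{\psi_{01}},\ket{\psi_{12}},\ket{\psi_{32}}\}$, $\{\ket{\psi_{01}},\ket{\psi_{13}},\ket{\psi_{31}}\}$, $\{\ket{\psi_{01}},\ket{\psi_{13}},\ket{\psi_{33}}\}$.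
   Context: Generalized Bell states in $\mathbb{C}^4\otimes\mathbb{C}^4$ (Alice holds the first factor, Bob the second): $\ket{\psi_{nm}}=\frac12\sum_{j=0}^{3}e^{2\pi i jn/4}\ket{j}_A\ket{j\oplus_4 m}_B$ for $n,m\in\{0,1,2,3\}$, where $j\oplus_4 m=(j+m)\bmod 4$. Perfect distinguishability by one-way LOCC using only projective measurements means: one party performs a projective measurement on her subsystem, communicates the outcome classically, and the other party then performs a projective measurement (depending on that outcome) whose result identifies with certainty which state of the set was shared. *)

theory Defs
  imports Complex_Main
begin

text \<open>Operators on C^4 are represented as functions nat => nat => complex,
  only the entries with indices < 4 being relevant. A vector of C^4 (x) C^4 is a
  function nat => nat => complex, psi j k = coefficient of |j>_A |k>_B (j,k < 4).\<close>

type_synonym op4 = "nat \<Rightarrow> nat \<Rightarrow> complex"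
type_synonym bvec = "nat \<Rightarrow> nat \<Rightarrow> complex"

definition mmul :: "op4 \<Rightarrow> op4 \<Rightarrow> op4" where
  "mmul A B = (\<lambda>i j. \<Sum>k<4. A i k * B k j)"

definition is_projector :: "op4 \<Rightarrow> bool" where
  "is_projector P \<longleftrightarrow>
     (\<forall>i<4. \<forall>j<4. P i j = cnj (P j i) \<and> mmul P P i j = P i j)"

definition proj_meas :: "nat \<Rightarrow> (nat \<Rightarrow> op4) \<Rightarrow> bool" where
  "proj_meas m P \<longleftrightarrow>
     (\<forall>a<m. is_projector (P a)) \<and>
     (\<forall>a<m. \<forall>b<m. a \<noteq> b \<longrightarrow> (\<forall>i<4. \<forall>j<4. mmul (P a) (P b) i j = 0)) \<and>
     (\<forall>i<4. \<forall>j<4. (\<Sum>a<m. P a i j) = (if i = j then 1 else 0))"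

definition bell :: "nat \<Rightarrow> nat \<Rightarrow> bvec" where
  "bell n m = (\<lambda>j k. if j < 4 \<and> k < 4 \<and> k = (j + m) mod 4
                      then (1/2) * cis (2 * pi * real j * real n / 4) else 0)"

definition tensor_apply :: "op4 \<Rightarrow> op4 \<Rightarrow> bvec \<Rightarrow> bvec" where
  "tensor_apply A B psi = (\<lambda>i j. \<Sum>k<4. \<Sum>l<4. A i k * B j l * psi k l)"

definition nonzero_bvec :: "bvec \<Rightarrow> bool" where
  "nonzero_bvec v \<longleftrightarrow> (\<exists>i<4. \<exists>j<4. v i j \<noteq> 0)"

text \<open>Outcome (A, B) has nonzero probability on Bell state with label s iff
  (A (x) B) psi_s is nonzero.\<close>
definition identifies :: "op4 \<Rightarrow> op4 \<Rightarrow> (nat \<times> nat) set \<Rightarrow> bool" where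
  "identifies A B S \<longleftrightarrow>
     (\<forall>s\<in>S. \<forall>t\<in>S. nonzero_bvec (tensor_apply A B (bell (fst s) (snd s))) \<and>
                   nonzero_bvec (tensor_apply A B (bell (fst t) (snd t))) \<longrightarrow> s = t)"

definition oneway_A_to_B :: "(nat \<times> nat) set \<Rightarrow> bool" where
  "oneway_A_to_B S \<longleftrightarrow>
     (\<exists>m P. proj_meas m P \<and>
        (\<forall>a<m. \<exists>m' Q. proj_meas m' Q \<and> (\<forall>b<m'. identifies (P a) (Q b) S)))"

definition oneway_B_to_A :: "(nat \<times> nat) set \<Rightarrow> bool" where
  "oneway_B_to_A S \<longleftrightarrow>
     (\<exists>m Q. proj_meas m Q \<and>
        (\<forall>b<m. \<exists>m' P. proj_meas m' P \<and> (\<forall>a<m'. identifies (P a) (Q b) S)))"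

definition oneway_PVM_distinguishable :: "(nat \<times> nat) set \<Rightarrow> bool" where
  "oneway_PVM_distinguishable S \<longleftrightarrow> oneway_A_to_B S \<or> oneway_B_to_A S"

end

theory Submission
  imports Defs
begin
definition u :: "nat \<Rightarrow> complex" where "u e = \<i> ^ (e mod 4)"

lemma i_pow_mod: "\<i> ^ e = \<i> ^ (e mod 4)"
proof -
  have "\<i> ^ e = \<i> ^ (4 * (e div 4) + e mod 4)" by simp
  also have "\<dots> = \<i> ^ (e mod 4)" by (simp only: power_add power_mult) simp
  finally show ?thesis .
qed

lemma u_pow: "u e = \<i> ^ e" unfolding u_def by (rule i_pow_mod[symmetric])

lemma bell_u: "bell n m j k = (if j < 4 \<and> k < 4 \<and> k = (j + m) mod 4 then u (j*n) / 2 else 0)"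
proof -
  have "cis (2 * pi * real j * real n / 4) = cis (pi/2) ^ (j*n)"
    by (simp only: DeMoivre) (simp add: field_simps)
  also have "\<dots> = u (j*n)" unfolding u_def
    by (simp add: i_pow_mod[of "j*n"])
  finally show ?thesis unfolding bell_def by simp
qed

lemma u_mult: "u a * u b = u (a + b)" by (simp add: u_pow power_add)
lemma i3: "\<i> ^ 3 = - \<i>" by (simp add: power3_eq_cube)
lemma cnj_u: "cnj (u a) = u (3 * a)"
  by (simp add: u_pow power_mult i3)
lemma u_4: "u (4 * a) = 1" by (simp add: u_def)
lemma u_eval: "u n = (if n mod 4 = 0 then 1 else if n mod 4 = 1 then \<i> else if n mod 4 = 2 then -1 else -\<i>)"
proof -
  have "n mod 4 < 4" by simp
  then have "n mod 4 = 0 \<or> n mod 4 = 1 \<or> n mod 4 = 2 \<or> n mod 4 = 3" by linarith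
  then show ?thesis unfolding u_def by (auto simp: power3_eq_cube)
qed

definition proj :: "(nat \<Rightarrow> complex) \<Rightarrow> op4" where "proj v = (\<lambda>i j. v i * cnj (v j))"
definition inner :: "(nat \<Rightarrow> complex) \<Rightarrow> (nat \<Rightarrow> complex) \<Rightarrow> complex" where
  "inner v w = (\<Sum>l<4. cnj (v l) * w l)"
definition ov :: "(nat \<Rightarrow> complex) \<Rightarrow> (nat \<Rightarrow> complex) \<Rightarrow> bvec \<Rightarrow> complex" where
  "ov v w psi = (\<Sum>k<4. \<Sum>l<4. cnj (v k) * cnj (w l) * psi k l)"

lemma mmul_proj: "mmul (proj v) (proj w) i j = v i * inner v w * cnj (w j)"
  unfolding mmul_def proj_def inner_def
  by (simp add: sum_distrib_left sum_distrib_right mult_ac)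

lemma proj_meas_from:
  assumes "\<forall>a<m. inner (V a) (V a) = 1"
    "\<forall>a<m. \<forall>b<m. a \<noteq> b \<longrightarrow> inner (V a) (V b) = 0"
    "\<forall>i<4. \<forall>j<4. (\<Sum>a<m. V a i * cnj (V a j)) = (if i = j then 1 else 0)"
  shows "proj_meas m (\<lambda>a. proj (V a))"
  using assms unfolding proj_meas_def is_projector_def
  by (auto simp: mmul_proj) (auto simp: proj_def)

lemma tensor_proj: "tensor_apply (proj v) (proj w) psi i j = v i * w j * ov v w psi"
  unfolding tensor_apply_def proj_def ov_def
  by (simp add: sum_distrib_left mult_ac)

lemma nz_ov: "nonzero_bvec (tensor_apply (proj v) (proj w) psi) \<Longrightarrow> ov v w psi \<noteq> 0"
  unfolding nonzero_bvec_def tensor_proj by auto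

lemma eqk: "k < 4 \<Longrightarrow> l < (4::nat) \<Longrightarrow> m < 4 \<Longrightarrow> (l = (k + m) mod 4) = (k = (l + 4 - m) mod 4)"
proof -
  assume "k < 4" "l < 4" "m < 4"
  then have "k \<in> {0,1,2,3}" "l \<in> {0,1,2,3}" "m \<in> {0,1,2,3}" by auto
  then show ?thesis by (elim insertE emptyE; simp)
qed

definition alpha :: "nat \<Rightarrow> nat \<Rightarrow> complex" where
  "alpha c j = (if j < 4 then u (j*c + 2*(j div 2)) / 2 else 0)"

definition phi :: "nat \<Rightarrow> nat \<times> nat \<Rightarrow> nat \<Rightarrow> complex" where
  "phi c s l = 2 * (\<Sum>k<4. cnj (alpha c k) * bell (fst s) (snd s) k l)"

lemma ov_phi: "ov (alpha c) w (bell n m) = inner w (phi c (n,m)) / 2"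
  unfolding ov_def inner_def phi_def
  by (subst sum.swap) (simp add: sum_distrib_left mult_ac)

definition vecE :: "(nat \<Rightarrow> nat) \<Rightarrow> nat \<Rightarrow> complex" where
  "vecE E = (\<lambda>l. if l < 4 then u (E l) / 2 else 0)"

definition phiE :: "nat \<Rightarrow> nat \<Rightarrow> nat \<Rightarrow> nat \<Rightarrow> nat" where
  "phiE c n m l = (let j = (l + 4 - m) mod 4 in 3 * (j*c + 2*(j div 2)) + j*n)"

lemma phi_closed:
  assumes "m < 4"
  shows "phi c (n,m) = vecE (phiE c n m)"
proof
  fix l
  show "phi c (n, m) l = vecE (phiE c n m) l"
  proof (cases "l < 4")
    case False
    then show ?thesis unfolding phi_def vecE_def by (simp add: bell_u)
  next
    case True
    define j where "j = (l + 4 - m) mod 4"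
    have j4: "j < 4" unfolding j_def by simp
    have eq: "k < 4 \<Longrightarrow> (l = (k + m) mod 4) = (k = j)" for k unfolding j_def
      using eqk[OF _ True assms] by blast
    have "phi c (n,m) l = 2 * (\<Sum>k<4. if k = j then cnj (alpha c k) * (u (k*n) / 2) else 0)"
      unfolding phi_def by (intro arg_cong[where f="\<lambda>x. 2 * x"] sum.cong) (auto simp: bell_u True eq)
    also have "\<dots> = cnj (alpha c j) * u (j*n)" using j4 by simp
    also have "\<dots> = vecE (phiE c n m) l"
      unfolding vecE_def phiE_def alpha_def Let_def j_def[symmetric] using True j4
      by (simp add: cnj_u u_mult)
    finally show ?thesis .
  qed
qed

lemma sum4: "(\<Sum>a<4. f a) = f 0 + f 1 + f 2 + f (3::nat)"
  by (simp add: eval_nat_numeral)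
lemma all4: "(\<forall>a<4. P a) \<longleftrightarrow> P 0 \<and> P 1 \<and> P 2 \<and> P (3::nat)"
  by (auto simp: eval_nat_numeral less_Suc_eq)

lemma inner_vecE: "inner (vecE E) (vecE F) = (\<Sum>l<4. u (3 * E l + F l)) / 4"
  unfolding inner_def vecE_def by (simp add: sum_divide_distrib cnj_u u_mult)

lemma inner_vecE_self: "inner (vecE E) (vecE E) = 1"
proof -
  have "3 * E l + E l = 4 * E l" for l by simp
  then show ?thesis unfolding inner_vecE by (simp add: u_4)
qed

lemma compl_vecE: "i < 4 \<Longrightarrow> j < 4 \<Longrightarrow> (\<Sum>a<m. vecE (E a) i * cnj (vecE (E a) j)) = (\<Sum>a<m. u (E a i + 3 * E a j)) / 4"
  unfolding vecE_def by (simp add: sum_divide_distrib cnj_u u_mult)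


lemma alpha_vecE: "alpha c = vecE (\<lambda>j. j*c + 2*(j div 2))"
  unfolding alpha_def vecE_def by auto

lemma alpha_meas: "proj_meas 4 (\<lambda>c. proj (alpha c))"
proof (rule proj_meas_from)
  show "\<forall>a<4. inner (alpha a) (alpha a) = 1" by (simp add: alpha_vecE inner_vecE_self)
  show "\<forall>a<4. \<forall>b<4. a \<noteq> b \<longrightarrow> inner (alpha a) (alpha b) = 0"
    unfolding alpha_vecE inner_vecE by (simp add: all4 sum4 u_eval)
  show "\<forall>i<4. \<forall>j<4. (\<Sum>a<4. alpha a i * cnj (alpha a j)) = (if i = j then 1 else 0)"
    unfolding alpha_def by (simp add: all4 sum4 cnj_u u_mult u_eval)
qed

lemma main:
  assumes len: "length st = 4" and m4: "\<forall>s\<in>set st. snd s < 4"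
  and orthE: "\<forall>c<4. \<forall>a<4. \<forall>b<4. a \<noteq> b \<longrightarrow>
     (\<Sum>l<4. u (3 * phiE c (fst (st!a)) (snd (st!a)) l + phiE c (fst (st!b)) (snd (st!b)) l)) = 0"
  and complE: "\<forall>c<4. \<forall>i<4. \<forall>j<4. i \<noteq> j \<longrightarrow>
     (\<Sum>b<4. u (phiE c (fst (st!b)) (snd (st!b)) i + 3 * phiE c (fst (st!b)) (snd (st!b)) j)) = 0"
  shows "oneway_A_to_B (set st)"
proof -
  have A: "proj_meas 4 (\<lambda>c. proj (alpha c))" by (rule alpha_meas)
  have B: "\<exists>m' Q. proj_meas m' Q \<and> (\<forall>b<m'. identifies (proj (alpha c)) (Q b) (set st))"
    if c: "c < 4" for c
  proof -
    define E where "E b = phiE c (fst (st!b)) (snd (st!b))" for b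
    have ph: "b < 4 \<Longrightarrow> phi c (st!b) = vecE (E b)" for b
      using m4 len phi_closed[of "snd (st!b)" c "fst (st!b)"] by (auto simp: nth_mem E_def)
    have orth: "\<forall>a<4. \<forall>b<4. a \<noteq> b \<longrightarrow> inner (phi c (st!a)) (phi c (st!b)) = 0"
      using orthE c by (simp add: ph inner_vecE E_def)
    have QM: "proj_meas 4 (\<lambda>b. proj (phi c (st!b)))"
    proof (rule proj_meas_from)
      show "\<forall>a<4. inner (phi c (st!a)) (phi c (st!a)) = 1" by (simp add: ph inner_vecE_self)
      show "\<forall>a<4. \<forall>b<4. a \<noteq> b \<longrightarrow> inner (phi c (st!a)) (phi c (st!b)) = 0"
        by (rule orth)
      show "\<forall>i<4. \<forall>j<4. (\<Sum>a<4. phi c (st!a) i * cnj (phi c (st!a) j)) = (if i = j then 1 else 0)"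
      proof (intro allI impI)
        fix i j :: nat assume ij: "i < 4" "j < 4"
        have "(\<Sum>a<4. phi c (st!a) i * cnj (phi c (st!a) j)) = 
                (\<Sum>a<4. vecE (E a) i * cnj (vecE (E a) j))"
          by (rule sum.cong) (auto simp: ph)
        also have "\<dots> = (\<Sum>a<4. u (E a i + 3 * E a j)) / 4" using ij by (rule compl_vecE)
        also have "\<dots> = (if i = j then 1 else 0)"
        proof (cases "i = j")
          case False then show ?thesis using complE c ij by (simp add: E_def)
        next
          case True
          have "E a j + 3 * E a j = 4 * E a j" for a by simp
          then show ?thesis using True by (simp add: u_4)
        qed
        finally show "(\<Sum>a<4. phi c (st!a) i * cnj (phi c (st!a) j)) = (if i = j then 1 else 0)" .
      qed
    qed
    have ID: "identifies (proj (alpha c)) (proj (phi c (st!b))) (set st)" if b: "b < 4" for b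
      unfolding identifies_def
    proof (intro ballI impI)
      fix s t assume s: "s \<in> set st" and t: "t \<in> set st"
        and nz: "nonzero_bvec (tensor_apply (proj (alpha c)) (proj (phi c (st ! b))) (bell (fst s) (snd s))) \<and>
           nonzero_bvec (tensor_apply (proj (alpha c)) (proj (phi c (st ! b))) (bell (fst t) (snd t)))"
      have key: "x = st!b" if x: "x \<in> set st" and n: "nonzero_bvec (tensor_apply (proj (alpha c)) (proj (phi c (st ! b))) (bell (fst x) (snd x)))" for x
      proof -
        from x len obtain a where a: "a < 4" "x = st!a" by (auto simp: in_set_conv_nth)
        have "inner (phi c (st!b)) (phi c (fst x, snd x)) \<noteq> 0"
          using nz_ov[OF n] by (simp add: ov_phi)
        then have "inner (phi c (st!b)) (phi c (st!a)) \<noteq> 0" using a by simp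
        then have "a = b" using orth a b by blast
        then show ?thesis using a by simp
      qed
      show "s = t" using key[OF s] key[OF t] nz by simp
    qed
    show ?thesis using QM ID by blast
  qed
  show ?thesis unfolding oneway_A_to_B_def using A B by blast
qed

lemma set0: "oneway_PVM_distinguishable (insert (0,0) {(0,1),(1,0),(1,1)})"
proof -
  have "oneway_A_to_B (set [(0,0),(0,1),(1,0),(1,1)])"
    by (rule main) (simp_all add: all4 sum4 phiE_def u_def i3)
  then show ?thesis by (simp add: oneway_PVM_distinguishable_def)
qed

lemma set1: "oneway_PVM_distinguishable (insert (0,0) {(0,1),(1,0),(3,0)})"
proof -
  have "oneway_A_to_B (set [(0,0),(0,1),(1,0),(3,0)])"
    by (rule main) (simp_all add: all4 sum4 phiE_def u_def i3)
  then show ?thesis by (simp add: oneway_PVM_distinguishable_def)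
qed

lemma set2: "oneway_PVM_distinguishable (insert (0,0) {(0,1),(1,0),(3,2)})"
proof -
  have "oneway_A_to_B (set [(0,0),(0,1),(1,0),(3,2)])"
    by (rule main) (simp_all add: all4 sum4 phiE_def u_def i3)
  then show ?thesis by (simp add: oneway_PVM_distinguishable_def)
qed

lemma set3: "oneway_PVM_distinguishable (insert (0,0) {(0,1),(1,1),(1,2)})"
proof -
  have "oneway_A_to_B (set [(0,0),(0,1),(1,1),(1,2)])"
    by (rule main) (simp_all add: all4 sum4 phiE_def u_def i3)
  then show ?thesis by (simp add: oneway_PVM_distinguishable_def)
qed

lemma set4: "oneway_PVM_distinguishable (insert (0,0) {(0,1),(1,1),(3,1)})"
proof -
  have "oneway_A_to_B (set [(0,0),(0,1),(1,1),(3,1)])"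
    by (rule main) (simp_all add: all4 sum4 phiE_def u_def i3)
  then show ?thesis by (simp add: oneway_PVM_distinguishable_def)
qed

lemma set5: "oneway_PVM_distinguishable (insert (0,0) {(0,1),(1,1),(3,3)})"
proof -
  have "oneway_A_to_B (set [(0,0),(0,1),(1,1),(3,3)])"
    by (rule main) (simp_all add: all4 sum4 phiE_def u_def i3)
  then show ?thesis by (simp add: oneway_PVM_distinguishable_def)
qed

lemma set6: "oneway_PVM_distinguishable (insert (0,0) {(0,1),(1,2),(3,0)})"
proof -
  have "oneway_A_to_B (set [(0,0),(0,1),(1,2),(3,0)])"
    by (rule main) (simp_all add: all4 sum4 phiE_def u_def i3)
  then show ?thesis by (simp add: oneway_PVM_distinguishable_def)
qed

lemma set7: "oneway_PVM_distinguishable (insert (0,0) {(0,1),(1,2),(3,2)})"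
proof -
  have "oneway_A_to_B (set [(0,0),(0,1),(1,2),(3,2)])"
    by (rule main) (simp_all add: all4 sum4 phiE_def u_def i3)
  then show ?thesis by (simp add: oneway_PVM_distinguishable_def)
qed

lemma set8: "oneway_PVM_distinguishable (insert (0,0) {(0,1),(1,3),(3,1)})"
proof -
  have "oneway_A_to_B (set [(0,0),(0,1),(1,3),(3,1)])"
    by (rule main) (simp_all add: all4 sum4 phiE_def u_def i3)
  then show ?thesis by (simp add: oneway_PVM_distinguishable_def)
qed

lemma set9: "oneway_PVM_distinguishable (insert (0,0) {(0,1),(1,3),(3,3)})"
proof -
  have "oneway_A_to_B (set [(0,0),(0,1),(1,3),(3,3)])"
    by (rule main) (simp_all add: all4 sum4 phiE_def u_def i3)
  then show ?thesis by (simp add: oneway_PVM_distinguishable_def)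
qed

theorem theorem6:
  assumes "T \<in> {{(0,1),(1,0),(1,1)}, {(0,1),(1,0),(3,0)}, {(0,1),(1,0),(3,2)},
                 {(0,1),(1,1),(1,2)}, {(0,1),(1,1),(3,1)}, {(0,1),(1,1),(3,3)},
                 {(0,1),(1,2),(3,0)}, {(0,1),(1,2),(3,2)}, {(0,1),(1,3),(3,1)},
                 {(0,1),(1,3),(3,3)}}"
  shows "oneway_PVM_distinguishable (insert (0,0) T)"
proof -
  from assms have "T = {(0,1),(1,0),(1,1)} \<or> T = {(0,1),(1,0),(3,0)} \<or> T = {(0,1),(1,0),(3,2)} \<or>
                 T = {(0,1),(1,1),(1,2)} \<or> T = {(0,1),(1,1),(3,1)} \<or> T = {(0,1),(1,1),(3,3)} \<or>
                 T = {(0,1),(1,2),(3,0)} \<or> T = {(0,1),(1,2),(3,2)} \<or> T = {(0,1),(1,3),(3,1)} \<or>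
                 T = {(0,1),(1,3),(3,3)}"
    by (simp only: insert_iff empty_iff simp_thms)
  then show ?thesis
    by (elim disjE) (simp_all only: set0 set1 set2 set3 set4 set5 set6 set7 set8 set9)
qed

end
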